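(* For $\mathbf{x}=(x_0,x_1,x_2),\ \mathbf{y}=(y_0,y_1,y_2)\in\mathbb{R}^3$ let $\langle\mathbf{x},\mathbf{y}\rangle:=x_0y_0-x_1y_1-x_2y_2$. For parameters $\alpha,\beta$ set $q=\alpha-\beta$ and define $$\hat k(\mathbf{x},\mathbf{y},q)=\frac{\langle\mathbf{x},\mathbf{x}\rangle-\langle\mathbf{y},\mathbf{y}\rangle+q^2}{\langle\mathbf{x}+\mathbf{y},\mathbf{x}+\mathbf{y}\rangle+q^2},\qquad \hat{\mathbf{r}}(\mathbf{x},\mathbf{y},q)=\frac{(x_1y_2-x_2y_1,\ x_0y_2-x_2y_0,\ x_1y_0-x_0y_1)}{\langle\mathbf{x}+\mathbf{y},\mathbf{x}+\mathbf{y}\rangle+q^2}.$$ Define $\hat{\mathbf{R}}_{\alpha,\beta}:(\mathbf{x},\mathbf{y})\mapsto(\mathbf{u},\mathbf{v})$ by $$\mathbf{u}=\hat k(\mathbf{x},\mathbf{y},q)\,\mathbf{x}+\big(1-\hat k(\mathbf{y},\mathbf{x},q)\big)\mathbf{y}+2q\,\hat{\mathbf{r}}(\mathbf{x},\mathbf{y},q),$$ $$\mathbf{v}=\big(1-\hat k(\mathbf{x},\mathbf{y},q)\big)\mathbf{x}+\hat k(\mathbf{y},\mathbf{x},q)\,\mathbf{y}-2q\,\hat{\mathbf{r}}(\mathbf{x},\mathbf{y},q).$$ Then $\hat{\mathbf{R}}_{\alpha,\beta}$ is a parametric quadrirational Yang--Baxter map which satisfies the invariant conditions $$\mathbf{u}+\mathbf{v}=\mathbf{x}+\mathbf{y},\quad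 \langle\mathbf{u},\mathbf{u}\rangle=\langle\mathbf{x},\mathbf{x}\rangle,\quad \langle\mathbf{v},\mathbf{v}\rangle=\langle\mathbf{y},\mathbf{y}\rangle,$$ and admits a Lax representation $\mathbf{L}(\mathbf{u},\alpha,\zeta)\mathbf{L}(\mathbf{v},\beta,\zeta)=\mathbf{L}(\mathbf{y},\beta,\zeta)\mathbf{L}(\mathbf{x},\alpha,\zeta)$ with Lax matrix $$\mathbf{L}(\mathbf{x},\alpha,\zeta)=\begin{pmatrix}\zeta+i(x_2-\alpha) & x_0+x_1\\ x_0-x_1 & \zeta-i(x_2+\alpha)\end{pmatrix}.$$
   Context: A parametric Yang--Baxter map is a family of maps $R_{\alpha,\beta}:\mathcal{X}\times\mathcal{X}\to\mathcal{X}\times\mathcal{X}$, $R_{\alpha,\beta}(x,y)=(u(x,\alpha,y,\beta),v(x,\alpha,y,\beta))$, such that the map $((x,\alpha),(y,\beta))\mapsto((u,\alpha),(v,\beta))$ on $(\mathcal{X}\times\mathcal{I})^2$ satisfies the set-theoretical Yang--Baxter equation $R_{23}\circ R_{13}\circ R_{12}=R_{12}\circ R_{13}\circ R_{23}$, where $R_{ij}$ denotes the action of the map on the $i$-th and $j$-th factors of a triple product (e.g. $R_{13}(x,y,z)=(u(x,z),y,v(x,z))$). Equivalently, $R^{23}_{\beta,\gamma}\circ R^{13}_{\alpha,\gamma}\circ R^{12}_{\alpha,\beta}=R^{12}_{\alpha,\beta}\circ R^{13}_{\alpha,\gamma}\circ R^{23}_{\beta,\gamma}$. It is quadrirational if for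 fixed $y$ and fixed $x$ the maps $u(\cdot,y)$ and $v(x,\cdot)$ are birational isomorphisms of $\mathcal{X}$. Here $\mathcal{X}=\mathbb{R}^3$ and maps are understood generically, where defined; $i=\sqrt{-1}$ and $\zeta\in\mathbb{C}$ is a spectral parameter. *)

theory Defs
  imports "HOL-Analysis.Analysis"
begin

definition mink :: "real^3 \<Rightarrow> real^3 \<Rightarrow> real" where
  "mink x y = x$0 * y$0 - x$1 * y$1 - x$2 * y$2"

definition den :: "real^3 \<Rightarrow> real^3 \<Rightarrow> real \<Rightarrow> real" where
  "den x y q = mink (x + y) (x + y) + q^2"

definition khat :: "real^3 \<Rightarrow> real^3 \<Rightarrow> real \<Rightarrow> real" where
  "khat x y q = (mink x x - mink y y + q^2) / den x y q"

definition rhat :: "real^3 \<Rightarrow> real^3 \<Rightarrow> real \<Rightarrow> real^3" where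
  "rhat x y q = (1 / den x y q) *\<^sub>R
     (\<chi> i. if i = 0 then x$1 * y$2 - x$2 * y$1
            else if i = 1 then x$0 * y$2 - x$2 * y$0
            else x$1 * y$0 - x$0 * y$1)"

definition Rhat :: "real \<Rightarrow> real \<Rightarrow> (real^3) \<times> (real^3) \<Rightarrow> (real^3) \<times> (real^3)" where
  "Rhat a b xy = (let x = fst xy; y = snd xy; q = a - b in
     (khat x y q *\<^sub>R x + (1 - khat y x q) *\<^sub>R y + (2 * q) *\<^sub>R rhat x y q,
      (1 - khat x y q) *\<^sub>R x + khat y x q *\<^sub>R y - (2 * q) *\<^sub>R rhat x y q))"

definition Rhat_dom :: "real \<Rightarrow> real \<Rightarrow> (real^3) \<times> (real^3) \<Rightarrow> bool" where
  "Rhat_dom a b xy = (den (fst xy) (snd xy) (a - b) \<noteq> 0)"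

text \<open>R a b : X x X -> X x X, defined on D a b. The Yang--Baxter equation
 R23 o R13 o R12 = R12 o R13 o R23 is required at every point where all
 the intermediate maps on both sides are defined.\<close>
definition parametric_YB_map ::
  "('p \<Rightarrow> 'p \<Rightarrow> 'x \<times> 'x \<Rightarrow> bool) \<Rightarrow> ('p \<Rightarrow> 'p \<Rightarrow> 'x \<times> 'x \<Rightarrow> 'x \<times> 'x) \<Rightarrow> bool" where
  "parametric_YB_map D R =
    (\<forall>a b c x y z.
       (let (x1, y1) = R a b (x, y);
            (x2, z2) = R a c (x1, z);
            (y3, z3) = R b c (y1, z2);
            (y1', z1') = R b c (y, z);
            (x2', z2') = R a c (x, z1');
            (x3', y3') = R a b (x2', y1')
        in (D a b (x, y) \<and> D a c (x1, z) \<and> D b c (y1, z2) \<and>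
            D b c (y, z) \<and> D a c (x, z1') \<and> D a b (x2', y1'))
           \<longrightarrow> (x2, y3, z3) = (x3', y3', z2')))"

definition poly3 :: "(real^3 \<Rightarrow> real) \<Rightarrow> bool" where
  "poly3 p = (\<exists>(c :: nat \<times> nat \<times> nat \<Rightarrow> real) S. finite S \<and>
     (\<forall>x. p x = (\<Sum>(i, j, k)\<in>S. c (i, j, k) * x$0 ^ i * x$1 ^ j * x$2 ^ k)))"

definition nonzero_poly3 :: "(real^3 \<Rightarrow> real) \<Rightarrow> bool" where
  "nonzero_poly3 p = (poly3 p \<and> (\<exists>x. p x \<noteq> 0))"

definition rational_map3 :: "(real^3 \<Rightarrow> real^3) \<Rightarrow> bool" where
  "rational_map3 f = (\<exists>P Q. (\<forall>i::3. poly3 (P i)) \<and> nonzero_poly3 Q \<and>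
     (\<forall>x. Q x \<noteq> 0 \<longrightarrow> f x = (\<chi> i. P i x / Q x)))"

definition birational3 :: "(real^3 \<Rightarrow> real^3) \<Rightarrow> bool" where
  "birational3 f = (rational_map3 f \<and> (\<exists>g h1 h2. rational_map3 g \<and>
     nonzero_poly3 h1 \<and> nonzero_poly3 h2 \<and>
     (\<forall>x. h1 x \<noteq> 0 \<longrightarrow> g (f x) = x) \<and>
     (\<forall>y. h2 y \<noteq> 0 \<longrightarrow> f (g y) = y)))"

definition quadrirational3 :: "('p \<Rightarrow> 'p \<Rightarrow> (real^3) \<times> (real^3) \<Rightarrow> (real^3) \<times> (real^3)) \<Rightarrow> bool" where
  "quadrirational3 R = (\<forall>a b.
     (\<exists>h. nonzero_poly3 h \<and> (\<forall>y. h y \<noteq> 0 \<longrightarrow> birational3 (\<lambda>x. fst (R a b (x, y))))) \<and>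
     (\<exists>h. nonzero_poly3 h \<and> (\<forall>x. h x \<noteq> 0 \<longrightarrow> birational3 (\<lambda>y. snd (R a b (x, y))))))"

definition Lax :: "real^3 \<Rightarrow> real \<Rightarrow> complex \<Rightarrow> complex^2^2" where
  "Lax x a z = (\<chi> i j.
     if i = 1 then (if j = 1 then z + \<i> * (complex_of_real (x$2) - complex_of_real a)
                    else complex_of_real (x$0 + x$1))
     else (if j = 1 then complex_of_real (x$0 - x$1)
           else z - \<i> * (complex_of_real (x$2) + complex_of_real a)))"

end

theory Submission
  imports Defs
begin


lemma t3: "(3::3) = 0" by simp
lemma three_cases: "(\<forall>i::3. P i) \<longleftrightarrow> P 0 \<and> P 1 \<and> P 2"
  by (auto simp add: forall_3 t3)
lemma vec3_eq: "(x::real^3) = y \<longleftrightarrow> x$0 = y$0 \<and> x$1 = y$1 \<and> x$2 = y$2"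
  by (simp add: vec_eq_iff three_cases)

definition wedge :: "real^3 \<Rightarrow> real^3 \<Rightarrow> real^3" where
  "wedge x y = (\<chi> i. if i = 0 then x$1 * y$2 - x$2 * y$1
            else if i = 1 then x$0 * y$2 - x$2 * y$0
            else x$1 * y$0 - x$0 * y$1)"
definition dd :: "real^3 \<Rightarrow> real \<Rightarrow> real" where "dd s q = mink s s + q^2"
definition rot :: "real^3 \<Rightarrow> real^3 \<Rightarrow> real \<Rightarrow> real^3" where
  "rot x s q = x + (2 / dd s q) *\<^sub>R (mink x s *\<^sub>R s - mink s s *\<^sub>R x + q *\<^sub>R wedge x s)"

lemma wedge_c: "wedge x y $ 0 = x$1 * y$2 - x$2 * y$1" "wedge x y $ 1 = x$0 * y$2 - x$2 * y$0"
  "wedge x y $ 2 = x$1 * y$0 - x$0 * y$1"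
  by (simp_all add: wedge_def)

lemma mink_sym: "mink x y = mink y x" by (simp add: mink_def algebra_simps)
lemma mink_addL: "mink (x + y) z = mink x z + mink y z" by (simp add: mink_def algebra_simps)
lemma mink_addR: "mink z (x + y) = mink z x + mink z y" by (simp add: mink_def algebra_simps)
lemma mink_diffL: "mink (x - y) z = mink x z - mink y z" by (simp add: mink_def algebra_simps)
lemma mink_diffR: "mink z (x - y) = mink z x - mink z y" by (simp add: mink_def algebra_simps)
lemma mink_scaleL: "mink (c *\<^sub>R x) z = c * mink x z" by (simp add: mink_def algebra_simps)
lemma mink_scaleR: "mink z (c *\<^sub>R x) = c * mink z x" by (simp add: mink_def algebra_simps)
lemma mink_negL: "mink (- x) z = - mink x z" by (simp add: mink_def algebra_simps)
lemma mink_negR: "mink z (- x) = - mink z x" by (simp add: mink_def algebra_simps)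
lemma mink_zeroL: "mink 0 z = 0" by (simp add: mink_def)
lemma mink_zeroR: "mink z 0 = 0" by (simp add: mink_def)
lemmas mink_lin = mink_addL mink_addR mink_diffL mink_diffR mink_scaleL mink_scaleR mink_negL mink_negR mink_zeroL mink_zeroR

lemma wedge_addL: "wedge (x + y) z = wedge x z + wedge y z" by (simp add: vec3_eq wedge_c algebra_simps)
lemma wedge_addR: "wedge z (x + y) = wedge z x + wedge z y" by (simp add: vec3_eq wedge_c algebra_simps)
lemma wedge_diffL: "wedge (x - y) z = wedge x z - wedge y z" by (simp add: vec3_eq wedge_c algebra_simps)
lemma wedge_diffR: "wedge z (x - y) = wedge z x - wedge z y" by (simp add: vec3_eq wedge_c algebra_simps)
lemma wedge_scaleL: "wedge (c *\<^sub>R x) z = c *\<^sub>R wedge x z" by (simp add: vec3_eq wedge_c algebra_simps)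
lemma wedge_scaleR: "wedge z (c *\<^sub>R x) = c *\<^sub>R wedge z x" by (simp add: vec3_eq wedge_c algebra_simps)
lemma wedge_negL: "wedge (- x) z = - wedge x z" by (simp add: vec3_eq wedge_c algebra_simps)
lemma wedge_negR: "wedge z (- x) = - wedge z x" by (simp add: vec3_eq wedge_c algebra_simps)
lemma wedge_self: "wedge x x = 0" by (simp add: vec3_eq wedge_c algebra_simps)
lemma wedge_anti: "wedge y x = - wedge x y" by (simp add: vec3_eq wedge_c algebra_simps)
lemmas wedge_lin = wedge_addL wedge_addR wedge_diffL wedge_diffR wedge_scaleL wedge_scaleR wedge_negL wedge_negR wedge_self

lemma mink_wedge1: "mink (wedge x y) x = 0" by (simp add: mink_def wedge_c algebra_simps)
lemma mink_wedge2: "mink (wedge x y) y = 0" by (simp add: mink_def wedge_c algebra_simps)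
lemma mink_wedge1': "mink x (wedge x y) = 0" by (simp add: mink_def wedge_c algebra_simps)
lemma mink_wedge2': "mink y (wedge x y) = 0" by (simp add: mink_def wedge_c algebra_simps)
lemma wedge_wedge: "wedge (wedge x s) s = mink x s *\<^sub>R s - mink s s *\<^sub>R x"
  by (simp add: vec3_eq wedge_c mink_def algebra_simps)
lemma mink_wedge_wedge: "mink (wedge x s) (wedge x s) = mink s s * mink x x - (mink x s)^2"
  by (simp add: mink_def wedge_c algebra_simps power2_eq_square)


lemma rot_norm:
  assumes "dd s q \<noteq> 0"
  shows "mink (rot x s q) (rot x s q) = mink x x"
proof -
  define c where "c = 2 / dd s q"
  have c0: "c * dd s q = 2" using assms by (simp add: c_def)
  have c: "c * (mink s s + q^2) = 2" using c0 by (simp add: dd_def)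
  have "mink (rot x s q) (rot x s q) = mink x x + c * (c * (mink s s + q^2) - 2) * (mink s s * mink x x - (mink x s)^2)"
    unfolding rot_def c_def[symmetric]
    by (simp add: mink_lin mink_wedge1 mink_wedge2 mink_wedge1' mink_wedge2' mink_wedge_wedge mink_sym[of s x] algebra_simps power2_eq_square)
  then show ?thesis using c by simp
qed

definition Ch :: "real^3 \<Rightarrow> real^3 \<Rightarrow> real^3 \<Rightarrow> real \<Rightarrow> bool" where
  "Ch u x s q = (mink (u - x) s = 0 \<and> q *\<^sub>R (u - x) = wedge (u + x) s)"

lemma rot_Ch:
  assumes "dd s q \<noteq> 0"
  shows "Ch (rot x s q) x s q"
proof -
  define c where "c = 2 / dd s q"
  have c0: "c * dd s q = 2" using assms by (simp add: c_def)
  have c: "c * (mink s s + q^2) = 2" using c0 by (simp add: dd_def)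
  have r: "rot x s q - x = c *\<^sub>R (mink x s *\<^sub>R s - mink s s *\<^sub>R x + q *\<^sub>R wedge x s)"
    by (simp add: rot_def c_def)
  have r2: "rot x s q + x = 2 *\<^sub>R x + c *\<^sub>R (mink x s *\<^sub>R s - mink s s *\<^sub>R x + q *\<^sub>R wedge x s)"
    by (simp add: rot_def c_def scaleR_2)
  have 1: "mink (rot x s q - x) s = 0"
    unfolding r by (simp add: mink_lin mink_wedge2 mink_sym[of s x] algebra_simps)
  have "wedge (rot x s q + x) s = (2 - c * mink s s) *\<^sub>R wedge x s + (c * q) *\<^sub>R (mink x s *\<^sub>R s - mink s s *\<^sub>R x)"
    unfolding r2 by (simp add: wedge_lin wedge_wedge algebra_simps)
  also have "2 - c * mink s s = c * q * q" using c by (simp add: algebra_simps power2_eq_square)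
  finally have 2: "q *\<^sub>R (rot x s q - x) = wedge (rot x s q + x) s"
    unfolding r by (simp add: algebra_simps)
  show ?thesis using 1 2 by (simp add: Ch_def)
qed


lemma Ch_zero:
  assumes "dd s q \<noteq> 0" "mink w s = 0" "q *\<^sub>R w = wedge w s"
  shows "w = 0"
proof -
  have "(q * q) *\<^sub>R w = q *\<^sub>R (q *\<^sub>R w)" by simp
  also have "\<dots> = q *\<^sub>R wedge w s" using assms(3) by simp
  also have "\<dots> = wedge (q *\<^sub>R w) s" by (simp add: wedge_scaleL)
  also have "\<dots> = wedge (wedge w s) s" using assms(3) by simp
  also have "\<dots> = - mink s s *\<^sub>R w" using assms(2) by (simp add: wedge_wedge)
  finally have "(q * q + mink s s) *\<^sub>R w = 0" by (simp add: algebra_simps)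
  moreover have "q * q + mink s s \<noteq> 0" using assms(1) by (simp add: dd_def power2_eq_square add.commute)
  ultimately show ?thesis by simp
qed

lemma Ch_unique:
  assumes "dd s q \<noteq> 0" "Ch u x s q"
  shows "u = rot x s q"
proof -
  let ?r = "rot x s q"
  have r: "Ch ?r x s q" using rot_Ch assms(1) .
  have "mink (u - ?r) s = 0"
  proof -
    have "u - ?r = (u - x) - (?r - x)" by simp
    then show ?thesis using r assms(2) unfolding Ch_def by (simp add: mink_diffL)
  qed
  moreover have "q *\<^sub>R (u - ?r) = wedge (u - ?r) s"
  proof -
    have "q *\<^sub>R (u - ?r) = q *\<^sub>R (u - x) - q *\<^sub>R (?r - x)" by (simp add: algebra_simps)
    also have "\<dots> = wedge (u + x) s - wedge (?r + x) s" using r assms(2) unfolding Ch_def by simp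
    also have "\<dots> = wedge (u - ?r) s" by (simp add: wedge_lin)
    finally show ?thesis .
  qed
  ultimately have "u - ?r = 0" using Ch_zero assms(1) by blast
  then show ?thesis by simp
qed

lemma Ch_swap:
  assumes "Ch u x (x + p) q" "mink u u = mink x x"
  shows "Ch x u (u - p) q"
proof -
  have h1: "mink u x + mink u p - mink x x - mink x p = 0"
    using assms(1) unfolding Ch_def by (simp add: mink_lin algebra_simps)
  have h2: "q *\<^sub>R (u - x) = wedge u x + wedge u p + wedge x p"
    using assms(1) unfolding Ch_def by (simp add: wedge_lin)
  have 1: "mink (x - u) (u - p) = 0"
    using h1 assms(2) by (simp add: mink_lin mink_sym[of x u] mink_sym[of p u] mink_sym[of p x] algebra_simps)
  have "q *\<^sub>R (x - u) = - (q *\<^sub>R (u - x))" by (simp add: algebra_simps)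
  also have "\<dots> = wedge (x + u) (u - p)"
    unfolding h2 by (simp add: wedge_lin wedge_anti[of u x])
  finally show ?thesis using 1 by (simp add: Ch_def)
qed

lemma inv1:
  assumes "dd (x + p) q \<noteq> 0" "dd (rot x (x + p) q - p) q \<noteq> 0"
  shows "rot (rot x (x + p) q) (rot x (x + p) q - p) q = x"
proof -
  have "Ch (rot x (x + p) q) x (x + p) q" using rot_Ch assms(1) .
  moreover have "mink (rot x (x + p) q) (rot x (x + p) q) = mink x x" using rot_norm assms(1) .
  ultimately have "Ch x (rot x (x + p) q) (rot x (x + p) q - p) q" by (rule Ch_swap)
  from Ch_unique[OF assms(2) this] show ?thesis by simp
qed

lemma inv2:
  assumes "dd (u - p) q \<noteq> 0" "dd (rot u (u - p) q + p) q \<noteq> 0"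
  shows "rot (rot u (u - p) q) (rot u (u - p) q + p) q = u"
proof -
  let ?x = "rot u (u - p) q"
  have "Ch ?x u (u + (- p)) q" using rot_Ch assms(1) by simp
  moreover have "mink ?x ?x = mink u u" using rot_norm assms(1) .
  ultimately have "Ch u ?x (?x - (- p)) q" by (rule Ch_swap)
  then have "Ch u ?x (?x + p) q" by simp
  from Ch_unique[OF assms(2) this] show ?thesis by simp
qed

lemma rot_sum:
  "rot x (x + y) q + rot y (x + y) q = x + y"
proof -
  let ?s = "x + y"
  have "(mink x ?s *\<^sub>R ?s - mink ?s ?s *\<^sub>R x + q *\<^sub>R wedge x ?s) + (mink y ?s *\<^sub>R ?s - mink ?s ?s *\<^sub>R y + q *\<^sub>R wedge y ?s)
     = (mink x ?s + mink y ?s) *\<^sub>R ?s - mink ?s ?s *\<^sub>R ?s + q *\<^sub>R wedge ?s ?s"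
    by (simp only: wedge_addL scaleR_add_left scaleR_add_right) (simp add: algebra_simps)
  also have "\<dots> = 0" by (simp add: wedge_self mink_addL[symmetric])
  finally have "(mink x ?s *\<^sub>R ?s - mink ?s ?s *\<^sub>R x + q *\<^sub>R wedge x ?s) + (mink y ?s *\<^sub>R ?s - mink ?s ?s *\<^sub>R y + q *\<^sub>R wedge y ?s) = 0" .
  then have "(2 / dd ?s q) *\<^sub>R (mink x ?s *\<^sub>R ?s - mink ?s ?s *\<^sub>R x + q *\<^sub>R wedge x ?s) + (2 / dd ?s q) *\<^sub>R (mink y ?s *\<^sub>R ?s - mink ?s ?s *\<^sub>R y + q *\<^sub>R wedge y ?s) = 0"
    by (simp only: scaleR_add_right[symmetric]) simp
  then show ?thesis unfolding rot_def by (simp add: algebra_simps)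
qed


lemma R_rot:
  assumes "den x y (a - b) \<noteq> 0"
  shows "Rhat a b (x, y) = (rot x (x + y) (a - b), rot y (x + y) (a - b))"
proof -
  define q where "q = a - b"
  define s where "s = x + y"
  define D where "D = den x y q"
  define c where "c = 2 / D"
  have D0: "D \<noteq> 0" using assms by (simp add: D_def q_def)
  have Dsw: "den y x q = D" by (simp add: D_def den_def add.commute)
  have Dd: "dd s q = D" by (simp add: D_def den_def dd_def s_def)
  have De: "D = mink s s + q^2" by (simp add: D_def den_def s_def)
  have W: "wedge x s = wedge x y" by (simp add: s_def wedge_lin)
  have k1: "khat x y q = 1 + c * (mink x s - mink s s)"
    unfolding khat_def D_def[symmetric] c_def using D0
    by (simp add: field_simps De s_def mink_lin mink_sym[of y x])
  have k2: "1 - khat y x q = c * mink x s"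
    unfolding khat_def Dsw c_def using D0
    by (simp add: field_simps De s_def mink_lin mink_sym[of y x])
  have rh: "rhat x y q = (1 / D) *\<^sub>R wedge x y"
    by (simp add: rhat_def wedge_def D_def)
  have u: "fst (Rhat a b (x, y)) = rot x s q"
    unfolding Rhat_def Let_def q_def[symmetric] rot_def Dd c_def[symmetric] W
    apply (simp only: fst_conv snd_conv k1 k2 rh)
    apply (simp add: vec3_eq s_def c_def algebra_simps)
    done
  have v: "snd (Rhat a b (x, y)) = x + y - fst (Rhat a b (x, y))"
    unfolding Rhat_def Let_def by (simp add: algebra_simps)
  have "rot y s q = x + y - rot x s q" using rot_sum[of x y q] by (simp add: s_def algebra_simps)
  then show ?thesis using u v by (simp add: s_def q_def prod_eq_iff)
qed



type_synonym cm = "complex^2^2"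

lemma t2: "(2::2) = 0" by simp
lemma two_cases: "(\<forall>i::2. P i) \<longleftrightarrow> P 0 \<and> P 1"
  by (auto simp add: forall_2 t2)
lemma sum2: "sum f (UNIV::2 set) = f 0 + f 1"
  by (simp add: sum_2 t2 add.commute)

lemma mat_eq: "(A::cm) = B \<longleftrightarrow> A$0$0 = B$0$0 \<and> A$0$1 = B$0$1 \<and> A$1$0 = B$1$0 \<and> A$1$1 = B$1$1"
  by (auto simp: vec_eq_iff two_cases)

lemma mm: "((A::cm) ** B)$i$j = A$i$0 * B$0$j + A$i$1 * B$1$j"
  by (simp add: matrix_matrix_mult_def sum2)

lemma mat_c: "(mat c :: cm)$i$j = (if i = j then c else 0)"
  by (simp add: mat_def)

definition adj2 :: "cm \<Rightarrow> cm" where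
  "adj2 M = (\<chi> i j. if i = 0 \<and> j = 0 then M$1$1 else if i = 1 \<and> j = 1 then M$0$0 else - M$i$j)"
definition det2 :: "cm \<Rightarrow> complex" where
  "det2 M = M$0$0 * M$1$1 - M$0$1 * M$1$0"

lemma adj2_c: "adj2 M $0$0 = M$1$1" "adj2 M $1$1 = M$0$0" "adj2 M $0$1 = - M$0$1" "adj2 M $1$0 = - M$1$0"
  by (simp_all add: adj2_def)

lemmas ent = mm mat_c adj2_c det2_def

lemma mdistL: "(A::cm) ** ((B::cm) + C) = A ** B + A ** C" by (subst mat_eq) (simp add: ent algebra_simps)
lemma mdistR: "((A::cm) + B) ** (C::cm) = A ** C + B ** C" by (subst mat_eq) (simp add: ent algebra_simps)
lemma mdistLm: "(A::cm) ** ((B::cm) - C) = A ** B - A ** C" by (subst mat_eq) (simp add: ent algebra_simps)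
lemma mdistRm: "((A::cm) - B) ** (C::cm) = A ** C - B ** C" by (subst mat_eq) (simp add: ent algebra_simps)
lemma massoc: "(A::cm) ** ((B::cm) ** (C::cm)) = (A ** B) ** C" by (subst mat_eq) (simp add: ent algebra_simps)
lemma mat_comm: "(mat c :: cm) ** (A::cm) = A ** (mat c :: cm)" by (simp add: mat_eq ent algebra_simps)
lemma adj_mul_r: "(A::cm) ** adj2 A = mat (det2 A)" by (simp add: mat_eq ent algebra_simps)
lemma adj_mul_l: "adj2 A ** (A::cm) = mat (det2 A)" by (simp add: mat_eq ent algebra_simps)
lemma det2_mul: "det2 ((A::cm) ** (B::cm)) = det2 A * det2 B" by (simp add: ent algebra_simps)
lemma adj2_mul: "adj2 ((A::cm) ** (B::cm)) = adj2 B ** adj2 A" by (simp add: mat_eq ent algebra_simps)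
lemma adj2_add: "adj2 ((A::cm) + B) = adj2 A + adj2 B" by (simp add: mat_eq ent algebra_simps)
lemma adj2_diff: "adj2 ((A::cm) - B) = adj2 A - adj2 B" by (simp add: mat_eq ent algebra_simps)

lemma cancel_r:
  assumes "det2 K \<noteq> 0" "(P::cm) ** K = Q ** K"
  shows "P = Q"
proof -
  have "P ** mat (det2 K) = Q ** mat (det2 K)"
    using assms(2) by (metis adj_mul_r massoc)
  then show ?thesis using assms(1) by (simp add: mat_eq ent)
qed

definition Lm :: "real^3 \<Rightarrow> real \<Rightarrow> cm" where "Lm x a = Lax x a 0"

lemma Lm_c: "Lm x a $1$1 = \<i> * (of_real (x$2) - of_real a)" "Lm x a $1$0 = of_real (x$0 + x$1)"
   "Lm x a $0$1 = of_real (x$0 - x$1)" "Lm x a $0$0 = - \<i> * (of_real (x$2) + of_real a)"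
  by (simp_all add: Lm_def Lax_def)

lemma Lax_Lm: "Lax x a z = Lm x a + mat z"
  by (simp add: mat_eq Lm_c mat_c) (simp add: Lax_def)

definition GG :: "real^3 \<Rightarrow> real \<Rightarrow> cm" where "GG s q = Lm s 0 + mat (\<i> * of_real q)"

lemma Gm_GG: "Lm y b - adj2 (Lm x a) = GG (x + y) (a - b)"
  by (subst mat_eq) (simp add: GG_def ent Lm_c algebra_simps)

lemma Ch_mat:
  assumes "Ch u x s q"
  shows "Lm u c ** GG s q = GG s q ** Lm x c"
proof -
  have h1: "(u$0 - x$0) * s$0 - (u$1 - x$1) * s$1 - (u$2 - x$2) * s$2 = 0"
    using assms(1) by (simp add: Ch_def mink_def)
  have h2: "q * (u$0 - x$0) = (u$1 + x$1) * s$2 - (u$2 + x$2) * s$1"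
     "q * (u$1 - x$1) = (u$0 + x$0) * s$2 - (u$2 + x$2) * s$0"
     "q * (u$2 - x$2) = (u$1 + x$1) * s$0 - (u$0 + x$0) * s$1"
    using assms(1) by (simp_all add: Ch_def vec3_eq wedge_c)
  show ?thesis
    apply (subst mat_eq)
    apply (simp add: GG_def ent Lm_c complex_eq_iff)
    using h1 h2 by algebra
qed

lemma det_GG: "det2 (GG s q) = - of_real (dd s q)"
  by (simp add: GG_def ent Lm_c dd_def mink_def complex_eq_iff power2_eq_square algebra_simps)



lemma adj_Lm: "adj2 (Lm x a) = mat (- 2 * \<i> * of_real a) - Lm x a"
  by (subst mat_eq) (simp add: ent Lm_c algebra_simps)

lemma adj_conj:
  assumes "Lm u a ** G = G ** Lm x a"
  shows "adj2 (Lm u a) ** G = G ** adj2 (Lm x a)"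
  unfolding adj_Lm using assms by (simp add: mdistRm mdistLm mat_comm)

lemma Lm_sum:
  assumes "u + v = x + y"
  shows "Lm u a + Lm v b = Lm x a + Lm y b"
proof -
  have v: "v = x + y - u" using assms by (simp add: algebra_simps)
  show ?thesis
    unfolding v by (subst mat_eq) (simp add: Lm_c algebra_simps)
qed

lemma Lm_inj:
  assumes "Lm u a = Lm w a"
  shows "u = w"
proof -
  have "Lm u a $1$0 = Lm w a $1$0" "Lm u a $0$1 = Lm w a $0$1" "Lm u a $1$1 = Lm w a $1$1"
    using assms by simp_all
  then have "u$0 + u$1 = w$0 + w$1" "u$0 - u$1 = w$0 - w$1" "u$2 = w$2"
    by (simp_all add: Lm_c complex_eq_iff)
  then show ?thesis by (simp add: vec3_eq)
qed

lemma step: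
  assumes "Rhat_dom a b (x, y)" "Rhat a b (x, y) = (u, v)"
  shows "u + v = x + y"
    and "Lm u a ** (Lm y b - adj2 (Lm x a)) = (Lm y b - adj2 (Lm x a)) ** Lm x a"
    and "Lm v b ** (Lm y b - adj2 (Lm x a)) = (Lm y b - adj2 (Lm x a)) ** Lm y b"
    and "det2 (Lm y b - adj2 (Lm x a)) \<noteq> 0"
    and "Lm u a ** Lm v b = Lm y b ** Lm x a"
proof -
  have d: "den x y (a - b) \<noteq> 0" using assms(1) by (simp add: Rhat_dom_def)
  have dd: "dd (x + y) (a - b) \<noteq> 0" using d by (simp add: dd_def den_def)
  have uv: "u = rot x (x + y) (a - b)" "v = rot y (x + y) (a - b)"
    using R_rot[OF d] assms(2) by simp_all
  show 1: "u + v = x + y" using uv rot_sum by simp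
  have chu: "Ch u x (x + y) (a - b)" using uv rot_Ch[OF dd] by simp
  have chv: "Ch v y (x + y) (a - b)" using uv rot_Ch[OF dd, of y] by simp
  show 2: "Lm u a ** (Lm y b - adj2 (Lm x a)) = (Lm y b - adj2 (Lm x a)) ** Lm x a"
    unfolding Gm_GG by (rule Ch_mat[OF chu])
  show 3: "Lm v b ** (Lm y b - adj2 (Lm x a)) = (Lm y b - adj2 (Lm x a)) ** Lm y b"
    unfolding Gm_GG by (rule Ch_mat[OF chv])
  show 4: "det2 (Lm y b - adj2 (Lm x a)) \<noteq> 0"
    unfolding Gm_GG det_GG using dd by simp
  let ?G = "Lm y b - adj2 (Lm x a)"
  have "(Lm u a ** Lm v b) ** ?G = ?G ** (Lm x a ** Lm y b)"
    by (metis 2 3 massoc)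
  also have "\<dots> = Lm y b ** Lm x a ** Lm y b - mat (det2 (Lm x a)) ** Lm y b"
    by (simp add: mdistRm massoc adj_mul_l)
  also have "\<dots> = Lm y b ** Lm x a ** Lm y b - Lm y b ** mat (det2 (Lm x a))"
    by (simp add: mat_comm)
  also have "\<dots> = (Lm y b ** Lm x a) ** ?G"
    by (simp add: mdistLm massoc[symmetric] adj_mul_r)
  finally show "Lm u a ** Lm v b = Lm y b ** Lm x a"
    using cancel_r[OF 4] by blast
qed

lemma Lax_Lm': "Lax x a z = Lm x a + (mat z :: cm)"
  by (subst mat_eq) (simp add: Lm_c mat_c Lax_def)

lemma Lax_eq:
  assumes "Rhat_dom a b (x, y)" "Rhat a b (x, y) = (u, v)"
  shows "Lax u a z ** Lax v b z = Lax y b z ** Lax x a z"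
proof -
  have s: "Lm u a + Lm v b = Lm y b + Lm x a" using Lm_sum[OF step(1)[OF assms]] by (simp add: add.commute)
  have p: "Lm u a ** Lm v b = Lm y b ** Lm x a" using step(5)[OF assms] .
  have "Lax u a z ** Lax v b z = Lm u a ** Lm v b + (Lm u a + Lm v b) ** mat z + (mat z :: cm) ** mat z"
    unfolding Lax_Lm' by (simp add: mdistL mdistR mat_comm[of z "Lm v b"] algebra_simps)
  also have "\<dots> = Lm y b ** Lm x a + (Lm y b + Lm x a) ** mat z + (mat z :: cm) ** mat z"
    using s p by simp
  also have "\<dots> = Lax y b z ** Lax x a z"
    unfolding Lax_Lm' by (simp add: mdistL mdistR mat_comm[of z "Lm x a"] algebra_simps)
  finally show ?thesis .
qed


lemma cancel_conj:
  assumes "P ** K = K ** X" "Q ** K = K ** X" "det2 K \<noteq> 0"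
  shows "(P::cm) = Q"
  using cancel_r[OF assms(3)] assms(1,2) by simp

lemma YB_core:
  assumes e1: "Rhat a b (x, y) = (x1, y1)" and e2: "Rhat a c (x1, z) = (x2, z2)"
    and e3: "Rhat b c (y1, z2) = (y3, z3)" and e4: "Rhat b c (y, z) = (y1', z1')"
    and e5: "Rhat a c (x, z1') = (x2', z2')" and e6: "Rhat a b (x2', y1') = (x3', y3')"
    and d1: "Rhat_dom a b (x, y)" and d2: "Rhat_dom a c (x1, z)" and d3: "Rhat_dom b c (y1, z2)"
    and d4: "Rhat_dom b c (y, z)" and d5: "Rhat_dom a c (x, z1')" and d6: "Rhat_dom a b (x2', y1')"
  shows "x2 = x3' \<and> y3 = y3' \<and> z3 = z2'"
proof -
  define A where "A = Lm x a"
  define B where "B = Lm y b"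
  define C where "C = Lm z c"
  define A1 where "A1 = Lm x1 a"
  define B1 where "B1 = Lm y1 b"
  define C2 where "C2 = Lm z2 c"
  define B1' where "B1' = Lm y1' b"
  define C1' where "C1' = Lm z1' c"
  define A2' where "A2' = Lm x2' a"
  define G1 where "G1 = B - adj2 A"
  define G2 where "G2 = C - adj2 A1"
  define G3 where "G3 = C2 - adj2 B1"
  define H1 where "H1 = C - adj2 B"
  define H2 where "H2 = C1' - adj2 A"
  define H3 where "H3 = B1' - adj2 A2'"
  note defs = A_def B_def C_def A1_def B1_def C2_def B1'_def C1'_def A2'_def G1_def G2_def G3_def H1_def H2_def H3_def
  have s1a: "A1 ** G1 = G1 ** A" using step(2)[OF d1 e1] by (simp add: defs)
  have s1b: "B1 ** G1 = G1 ** B" using step(3)[OF d1 e1] by (simp add: defs)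
  have s1d: "det2 G1 \<noteq> 0" using step(4)[OF d1 e1] by (simp add: defs)
  have s1l: "A1 ** B1 = B ** A" using step(5)[OF d1 e1] by (simp add: defs)
  have s1s: "x1 + y1 = x + y" using step(1)[OF d1 e1] .
  have s2a: "Lm x2 a ** G2 = G2 ** A1" using step(2)[OF d2 e2] by (simp add: defs)
  have s2c: "C2 ** G2 = G2 ** C" using step(3)[OF d2 e2] by (simp add: defs)
  have s2d: "det2 G2 \<noteq> 0" using step(4)[OF d2 e2] by (simp add: defs)
  have s2s: "x2 + z2 = x1 + z" using step(1)[OF d2 e2] .
  have s3c: "Lm z3 c ** G3 = G3 ** C2" using step(3)[OF d3 e3] by (simp add: defs)
  have s3d: "det2 G3 \<noteq> 0" using step(4)[OF d3 e3] by (simp add: defs)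
  have s3s: "y3 + z3 = y1 + z2" using step(1)[OF d3 e3] .
  have s4b: "B1' ** H1 = H1 ** B" using step(2)[OF d4 e4] by (simp add: defs)
  have s4c: "C1' ** H1 = H1 ** C" using step(3)[OF d4 e4] by (simp add: defs)
  have s4d: "det2 H1 \<noteq> 0" using step(4)[OF d4 e4] by (simp add: defs)
  have s4l: "B1' ** C1' = C ** B" using step(5)[OF d4 e4] by (simp add: defs)
  have s4s: "y1' + z1' = y + z" using step(1)[OF d4 e4] .
  have s5a: "A2' ** H2 = H2 ** A" using step(2)[OF d5 e5] by (simp add: defs)
  have s5c: "Lm z2' c ** H2 = H2 ** C1'" using step(3)[OF d5 e5] by (simp add: defs)
  have s5d: "det2 H2 \<noteq> 0" using step(4)[OF d5 e5] by (simp add: defs)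
  have s5s: "x2' + z2' = x + z1'" using step(1)[OF d5 e5] .
  have s6a: "Lm x3' a ** H3 = H3 ** A2'" using step(2)[OF d6 e6] by (simp add: defs)
  have s6s: "x3' + y3' = x2' + y1'" using step(1)[OF d6 e6] .
  have s1a': "adj2 A1 ** G1 = G1 ** adj2 A" using adj_conj s1a by (simp add: defs)
  have s5a': "adj2 A2' ** H2 = H2 ** adj2 A" using adj_conj s5a by (simp add: defs)
  have sumBC: "B1' + C1' = B + C" using Lm_sum[OF s4s] by (simp add: defs)
  have sumAB: "adj2 A1 + adj2 B1 = adj2 A + adj2 B"
    using Lm_sum[OF s1s, of a b] by (simp add: defs adj2_add[symmetric])
  have K: "G2 ** G1 = C ** B - C ** adj2 A - B ** adj2 A + adj2 A ** adj2 A"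
  proof -
    have "G2 ** G1 = C ** G1 - adj2 A1 ** G1" by (simp add: G2_def mdistRm)
    also have "\<dots> = C ** G1 - G1 ** adj2 A" by (simp add: s1a')
    also have "\<dots> = C ** B - C ** adj2 A - B ** adj2 A + adj2 A ** adj2 A"
      by (simp add: G1_def mdistRm mdistLm)
    finally show ?thesis .
  qed
  have K': "H3 ** H2 = C ** B - C ** adj2 A - B ** adj2 A + adj2 A ** adj2 A"
  proof -
    have "H3 ** H2 = B1' ** H2 - adj2 A2' ** H2" by (simp add: H3_def mdistRm)
    also have "\<dots> = B1' ** H2 - H2 ** adj2 A" by (simp add: s5a')
    also have "\<dots> = B1' ** C1' - (B1' + C1') ** adj2 A + adj2 A ** adj2 A"
      by (simp add: H2_def mdistRm mdistLm mdistR)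
    also have "\<dots> = C ** B - C ** adj2 A - B ** adj2 A + adj2 A ** adj2 A"
      by (simp add: s4l sumBC mdistR)
    finally show ?thesis .
  qed
  have xK: "Lm x2 a ** (G2 ** G1) = (G2 ** G1) ** A"
    by (metis massoc s1a s2a)
  have xK': "Lm x3' a ** (H3 ** H2) = (H3 ** H2) ** A"
    by (metis massoc s5a s6a)
  have "Lm x2 a = Lm x3' a"
    by (rule cancel_conj[OF xK xK'[unfolded K' K[symmetric]]]) (simp add: det2_mul s1d s2d)
  then have x: "x2 = x3'" by (rule Lm_inj)
  have L: "G3 ** G2 = C ** C - (adj2 A + adj2 B) ** C + adj2 A ** adj2 B"
  proof -
    have "G3 ** G2 = C2 ** G2 - adj2 B1 ** G2" by (simp add: G3_def mdistRm)
    also have "\<dots> = G2 ** C - adj2 B1 ** G2" by (simp add: s2c)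
    also have "\<dots> = C ** C - (adj2 A1 + adj2 B1) ** C + adj2 B1 ** adj2 A1"
      by (simp add: G2_def mdistRm mdistLm mdistR)
    also have "adj2 B1 ** adj2 A1 = adj2 A ** adj2 B"
      by (simp add: adj2_mul[symmetric] s1l)
    finally show ?thesis by (simp add: sumAB)
  qed
  have L': "H2 ** H1 = C ** C - (adj2 A + adj2 B) ** C + adj2 A ** adj2 B"
  proof -
    have "H2 ** H1 = C1' ** H1 - adj2 A ** H1" by (simp add: H2_def mdistRm)
    also have "\<dots> = H1 ** C - adj2 A ** H1" by (simp add: s4c)
    also have "\<dots> = C ** C - (adj2 A + adj2 B) ** C + adj2 A ** adj2 B"
      by (simp add: H1_def mdistRm mdistLm mdistR)
    finally show ?thesis .
  qed
  have zL: "Lm z3 c ** (G3 ** G2) = (G3 ** G2) ** C"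
    by (metis massoc s2c s3c)
  have zL': "Lm z2' c ** (H2 ** H1) = (H2 ** H1) ** C"
    by (metis massoc s4c s5c)
  have "Lm z3 c = Lm z2' c"
    by (rule cancel_conj[OF zL zL'[unfolded L' L[symmetric]]]) (simp add: det2_mul s2d s3d)
  then have z: "z3 = z2'" by (rule Lm_inj)
  have a1: "y1 = x + y - x1" by (metis s1s add_diff_cancel_left')
  have a2: "z2 = x1 + z - x2" by (metis s2s add_diff_cancel_left')
  have a3: "y3 = y1 + z2 - z3" by (metis s3s add_diff_cancel_right')
  have b1: "y1' = y + z - z1'" by (metis s4s add_diff_cancel_right')
  have b2: "x2' = x + z1' - z2'" by (metis s5s add_diff_cancel_right')
  have b3: "y3' = x2' + y1' - x3'" by (metis s6s add_diff_cancel_left')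
  have "y3 = (x + y + z) - x2 - z3" by (simp add: a1 a2 a3 algebra_simps)
  moreover have "y3' = (x + y + z) - x3' - z2'" by (simp add: b1 b2 b3 algebra_simps)
  ultimately show ?thesis using x z by simp
qed



definition mono3 :: "nat \<times> nat \<times> nat \<Rightarrow> real^3 \<Rightarrow> real" where
  "mono3 t x = x$0 ^ fst t * x$1 ^ fst (snd t) * x$2 ^ snd (snd t)"

lemma poly3_alt: "poly3 p \<longleftrightarrow> (\<exists>c S. finite S \<and> (\<forall>x. p x = (\<Sum>t\<in>S. c t * mono3 t x)))"
  unfolding poly3_def mono3_def
  by (simp add: case_prod_beta mult.assoc)

lemma poly3_gen:
  fixes T :: "'a set" and d :: "'a \<Rightarrow> real" and e :: "'a \<Rightarrow> nat \<times> nat \<times> nat"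
  assumes "finite T" "\<And>x. p x = (\<Sum>t\<in>T. d t * mono3 (e t) x)"
  shows "poly3 p"
  unfolding poly3_alt
proof (intro exI conjI allI)
  show "finite (e ` T)" using assms(1) by simp
  fix x
  have "(\<Sum>m\<in>e ` T. (\<Sum>t\<in>{t\<in>T. e t = m}. d t) * mono3 m x)
      = (\<Sum>m\<in>e ` T. (\<Sum>t\<in>{t\<in>T. e t = m}. d t * mono3 (e t) x))"
    by (auto simp: sum_distrib_right intro!: sum.cong)
  also have "\<dots> = (\<Sum>t\<in>T. d t * mono3 (e t) x)"
    using assms(1) by (intro sum.group) auto
  finally show "p x = (\<Sum>m\<in>e ` T. (\<Sum>t\<in>{t\<in>T. e t = m}. d t) * mono3 m x)"
    using assms(2) by simp
qed

lemma poly3_const: "poly3 (\<lambda>x. c)"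
  by (rule poly3_gen[where T="{()}" and d="\<lambda>_. c" and e="\<lambda>_. (0,0,0)"]) (auto simp: mono3_def)

lemma poly3_coord: "poly3 (\<lambda>x. x $ i)"
proof -
  have "i = 0 \<or> i = 1 \<or> i = 2"
    using three_cases[of "\<lambda>i. i = 0 \<or> i = 1 \<or> i = 2"] by blast
  then show ?thesis
  proof (elim disjE)
    assume "i = 0" then show ?thesis
      by (intro poly3_gen[where T="{()}" and d="\<lambda>_. 1" and e="\<lambda>_. (1,0,0)"]) (auto simp: mono3_def)
  next
    assume "i = 1" then show ?thesis
      by (intro poly3_gen[where T="{()}" and d="\<lambda>_. 1" and e="\<lambda>_. (0,1,0)"]) (auto simp: mono3_def)
  next
    assume "i = 2" then show ?thesis
      by (intro poly3_gen[where T="{()}" and d="\<lambda>_. 1" and e="\<lambda>_. (0,0,1)"]) (auto simp: mono3_def)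
  qed
qed

lemma poly3_add:
  assumes "poly3 f" "poly3 g" shows "poly3 (\<lambda>x. f x + g x)"
proof -
  obtain c1 S1 where 1: "finite S1" "\<And>x. f x = (\<Sum>t\<in>S1. c1 t * mono3 t x)" using assms(1) unfolding poly3_alt by blast
  obtain c2 S2 where 2: "finite S2" "\<And>x. g x = (\<Sum>t\<in>S2. c2 t * mono3 t x)" using assms(2) unfolding poly3_alt by blast
  show ?thesis
    by (rule poly3_gen[where T="S1 <+> S2" and d="case_sum c1 c2" and e="case_sum id id"])
       (use 1 2 in \<open>auto simp: sum.Plus o_def\<close>)
qed

lemma mono3_add: "mono3 (fst t + fst t', fst (snd t) + fst (snd t'), snd (snd t) + snd (snd t')) x = mono3 t x * mono3 t' x"
  by (simp add: mono3_def power_add algebra_simps)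

lemma mono3_add': "mono3 (i + i', j + j', k + k') x = mono3 (i, j, k) x * mono3 (i', j', k') x"
  by (simp add: mono3_def power_add algebra_simps)

lemma poly3_mult:
  assumes "poly3 f" "poly3 g" shows "poly3 (\<lambda>x. f x * g x)"
proof -
  obtain c1 S1 where 1: "finite S1" "\<And>x. f x = (\<Sum>t\<in>S1. c1 t * mono3 t x)" using assms(1) unfolding poly3_alt by blast
  obtain c2 S2 where 2: "finite S2" "\<And>x. g x = (\<Sum>t\<in>S2. c2 t * mono3 t x)" using assms(2) unfolding poly3_alt by blast
  show ?thesis
  proof (rule poly3_gen[where T="S1 \<times> S2" and d="\<lambda>(t,t'). c1 t * c2 t'"
        and e="\<lambda>(t,t'). (fst t + fst t', fst (snd t) + fst (snd t'), snd (snd t) + snd (snd t'))"])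
    show "finite (S1 \<times> S2)" using 1 2 by simp
    fix x
    have "f x * g x = (\<Sum>t\<in>S1. \<Sum>t'\<in>S2. (c1 t * mono3 t x) * (c2 t' * mono3 t' x))"
      by (simp add: 1 2 sum_product)
    also have "\<dots> = (\<Sum>(t,t')\<in>S1 \<times> S2. (c1 t * mono3 t x) * (c2 t' * mono3 t' x))"
      by (simp add: sum.cartesian_product)
    also have "\<dots> = (\<Sum>tt\<in>S1 \<times> S2. (case tt of (t, t') \<Rightarrow> c1 t * c2 t') *
          mono3 (case tt of (t, t') \<Rightarrow> (fst t + fst t', fst (snd t) + fst (snd t'), snd (snd t) + snd (snd t'))) x)"
      by (intro sum.cong refl) (clarsimp simp: mono3_add')
    finally show "f x * g x = (\<Sum>tt\<in>S1 \<times> S2. (case tt of (t, t') \<Rightarrow> c1 t * c2 t') *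
          mono3 (case tt of (t, t') \<Rightarrow> (fst t + fst t', fst (snd t) + fst (snd t'), snd (snd t) + snd (snd t'))) x)" .
  qed
qed

lemma poly3_uminus: "poly3 f \<Longrightarrow> poly3 (\<lambda>x. - f x)"
  using poly3_mult[OF poly3_const[of "-1"]] by simp

lemma poly3_diff: "poly3 f \<Longrightarrow> poly3 g \<Longrightarrow> poly3 (\<lambda>x. f x - g x)"
  using poly3_add[OF _ poly3_uminus] by simp

lemma poly3_pow: "poly3 f \<Longrightarrow> poly3 (\<lambda>x. f x ^ n)"
  by (induction n) (simp_all add: poly3_const poly3_mult)

lemmas poly3_intros = poly3_const poly3_coord poly3_add poly3_mult poly3_diff poly3_uminus poly3_pow



definition num :: "real^3 \<Rightarrow> real^3 \<Rightarrow> real \<Rightarrow> real^3" where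
  "num x s q = dd s q *\<^sub>R x + 2 *\<^sub>R (mink x s *\<^sub>R s - mink s s *\<^sub>R x + q *\<^sub>R wedge x s)"

lemma rot_num: "dd s q \<noteq> 0 \<Longrightarrow> rot x s q = (1 / dd s q) *\<^sub>R num x s q"
  unfolding rot_def num_def by (simp add: scaleR_add_right)

lemma rot_num_chi: "dd s q \<noteq> 0 \<Longrightarrow> rot x s q = (\<chi> i. num x s q $ i / dd s q)"
  by (simp add: rot_num vec_eq_iff divide_inverse mult.commute)

lemma poly_dd: "poly3 (\<lambda>x. dd (x + p) q)"
  unfolding dd_def mink_def by (simp add: power2_eq_square) (intro poly3_intros)

lemma poly_num: "poly3 (\<lambda>x. num x (x + p) q $ i)"
proof -
  have "poly3 (\<lambda>x. num x (x + p) q $ i)" if "i = 0 \<or> i = 1 \<or> i = 2" for i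
    using that unfolding num_def dd_def mink_def
    by (auto simp: wedge_c power2_eq_square intro!: poly3_intros)
  moreover have "i = 0 \<or> i = 1 \<or> i = 2" using three_cases[of "\<lambda>i. i = 0 \<or> i = 1 \<or> i = 2"] by blast
  ultimately show ?thesis by blast
qed

lemma rat:
  assumes "dd p q \<noteq> 0" "\<forall>x. dd (x + p) q \<noteq> 0 \<longrightarrow> f x = rot x (x + p) q"
  shows "rational_map3 f"
  unfolding rational_map3_def
proof (intro exI conjI allI impI)
  show "poly3 (\<lambda>x. num x (x + p) q $ i)" for i by (rule poly_num)
  show "nonzero_poly3 (\<lambda>x. dd (x + p) q)"
    unfolding nonzero_poly3_def using poly_dd assms(1) by (metis add_0)
  fix x assume "dd (x + p) q \<noteq> 0"
  then show "f x = (\<chi> i. num x (x + p) q $ i / dd (x + p) q)"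
    using assms(2) rot_num_chi by simp
qed

definition hh :: "real^3 \<Rightarrow> real \<Rightarrow> real^3 \<Rightarrow> real" where
  "hh p q x = dd (x + p) q * (mink (num x (x + p) q - dd (x + p) q *\<^sub>R p) (num x (x + p) q - dd (x + p) q *\<^sub>R p)
     + q^2 * (dd (x + p) q)^2)"

lemma poly_hh: "poly3 (hh p q)"
proof -
  have e: "hh p q = (\<lambda>x. dd (x + p) q * (
     (num x (x + p) q $ 0 - dd (x + p) q * p $ 0) * (num x (x + p) q $ 0 - dd (x + p) q * p $ 0)
   - (num x (x + p) q $ 1 - dd (x + p) q * p $ 1) * (num x (x + p) q $ 1 - dd (x + p) q * p $ 1)
   - (num x (x + p) q $ 2 - dd (x + p) q * p $ 2) * (num x (x + p) q $ 2 - dd (x + p) q * p $ 2)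
     + q^2 * (dd (x + p) q)^2))"
    by (simp add: hh_def mink_def fun_eq_iff)
  show ?thesis unfolding e by (intro poly3_intros poly_dd poly_num)
qed

lemma hh_eq:
  assumes "dd (x + p) q \<noteq> 0"
  shows "hh p q x = (dd (x + p) q)^3 * dd (rot x (x + p) q - p) q"
proof -
  define D where "D = dd (x + p) q"
  define w where "w = num x (x + p) q - D *\<^sub>R p"
  have D0: "D \<noteq> 0" using assms by (simp add: D_def)
  have "rot x (x + p) q - p = (1 / D) *\<^sub>R w"
    using D0 by (simp add: rot_num[OF assms] D_def[symmetric] w_def scaleR_diff_right)
  then have "dd (rot x (x + p) q - p) q = (mink w w + q^2 * D^2) / D^2"
    using D0 by (simp add: dd_def mink_lin field_simps power2_eq_square)
  moreover have "hh p q x = D * (mink w w + q^2 * D^2)" by (simp add: hh_def D_def w_def)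
  ultimately show ?thesis unfolding D_def[symmetric] using D0 by (simp add: field_simps power2_eq_square power3_eq_cube)
qed

lemma hh_nz:
  assumes "hh p q x \<noteq> 0"
  shows "dd (x + p) q \<noteq> 0" "dd (rot x (x + p) q - p) q \<noteq> 0"
proof -
  show 1: "dd (x + p) q \<noteq> 0" using assms by (auto simp: hh_def)
  show "dd (rot x (x + p) q - p) q \<noteq> 0" using assms hh_eq[OF 1] by auto
qed

lemma dd_neg: "dd (- p) q = dd p q" by (simp add: dd_def mink_lin)

lemma hh_0:
  assumes "dd p q \<noteq> 0"
  shows "hh p q 0 \<noteq> 0"
proof -
  have r: "rot 0 p q = 0" by (simp add: rot_def mink_lin wedge_c vec3_eq)
  have "dd (0 + p) q \<noteq> 0" using assms by simp
  from hh_eq[OF this] show ?thesis using assms r by (simp add: dd_neg)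
qed

lemma bir:
  assumes "dd p q \<noteq> 0" "\<forall>x. dd (x + p) q \<noteq> 0 \<longrightarrow> f x = rot x (x + p) q"
  shows "birational3 f"
  unfolding birational3_def
proof (intro conjI exI)
  show "rational_map3 f" by (rule rat[OF assms])
  have dn: "dd (- p) q \<noteq> 0" using assms(1) by (simp add: dd_neg)
  show "rational_map3 (\<lambda>u. rot u (u + - p) q)" by (rule rat[OF dn]) simp
  show "nonzero_poly3 (hh p q)" unfolding nonzero_poly3_def using poly_hh hh_0[OF assms(1)] by blast
  show "nonzero_poly3 (hh (- p) q)" unfolding nonzero_poly3_def using poly_hh hh_0[OF dn] by blast
  show "\<forall>x. hh p q x \<noteq> 0 \<longrightarrow> rot (f x) (f x + - p) q = x"
  proof (intro allI impI)
    fix x assume h: "hh p q x \<noteq> 0"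
    have fx: "f x = rot x (x + p) q" using assms(2) hh_nz(1)[OF h] by blast
    show "rot (f x) (f x + - p) q = x" unfolding fx using inv1[OF hh_nz[OF h]] by simp
  qed
  show "\<forall>u. hh (- p) q u \<noteq> 0 \<longrightarrow> f (rot u (u + - p) q) = u"
  proof (intro allI impI)
    fix u assume h: "hh (- p) q u \<noteq> 0"
    note n = hh_nz[OF h]
    have n1: "dd (u - p) q \<noteq> 0" using n(1) by simp
    have n2: "dd (rot u (u - p) q + p) q \<noteq> 0" using n(2) by simp
    have "f (rot u (u - p) q) = rot (rot u (u - p) q) (rot u (u - p) q + p) q"
      using assms(2) n2 by blast
    then show "f (rot u (u + - p) q) = u" using inv2[OF n1 n2] by simp
  qed
qed


lemma YB: "parametric_YB_map Rhat_dom Rhat"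
  unfolding parametric_YB_map_def
proof (intro allI)
  fix a b c :: real and x y z :: "real^3"
  obtain x1 y1 where e1: "Rhat a b (x, y) = (x1, y1)" by (cases "Rhat a b (x, y)") auto
  obtain x2 z2 where e2: "Rhat a c (x1, z) = (x2, z2)" by (cases "Rhat a c (x1, z)") auto
  obtain y3 z3 where e3: "Rhat b c (y1, z2) = (y3, z3)" by (cases "Rhat b c (y1, z2)") auto
  obtain y1' z1' where e4: "Rhat b c (y, z) = (y1', z1')" by (cases "Rhat b c (y, z)") auto
  obtain x2' z2' where e5: "Rhat a c (x, z1') = (x2', z2')" by (cases "Rhat a c (x, z1')") auto
  obtain x3' y3' where e6: "Rhat a b (x2', y1') = (x3', y3')" by (cases "Rhat a b (x2', y1')") auto
  show "let (x1, y1) = Rhat a b (x, y);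
            (x2, z2) = Rhat a c (x1, z);
            (y3, z3) = Rhat b c (y1, z2);
            (y1', z1') = Rhat b c (y, z);
            (x2', z2') = Rhat a c (x, z1');
            (x3', y3') = Rhat a b (x2', y1')
        in (Rhat_dom a b (x, y) \<and> Rhat_dom a c (x1, z) \<and> Rhat_dom b c (y1, z2) \<and>
            Rhat_dom b c (y, z) \<and> Rhat_dom a c (x, z1') \<and> Rhat_dom a b (x2', y1'))
           \<longrightarrow> (x2, y3, z3) = (x3', y3', z2')"
    unfolding Let_def e1 prod.case e2 prod.case e3 prod.case e4 prod.case e5 prod.case e6 prod.case
    using YB_core[OF e1 e2 e3 e4 e5 e6] by blast
qed

lemma den_dd: "den x y q = dd (x + y) q" by (simp add: den_def dd_def)

lemma nz_dd: "nonzero_poly3 (\<lambda>y. dd y q)"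
  unfolding nonzero_poly3_def
proof
  show "poly3 (\<lambda>y. dd y q)"
    unfolding dd_def mink_def by (simp add: power2_eq_square) (intro poly3_intros)
  let ?e = "(\<chi> i. if i = 0 then 1 else 0) :: real^3"
  have "dd ?e q = 1 + q^2" by (simp add: dd_def mink_def)
  also have "\<dots> > 0" by (simp add: add_pos_nonneg)
  finally show "\<exists>y. dd y q \<noteq> 0" by (metis less_irrefl)
qed

lemma QR: "quadrirational3 Rhat"
  unfolding quadrirational3_def
proof (intro allI conjI)
  fix a b :: real
  show "\<exists>h. nonzero_poly3 h \<and> (\<forall>y. h y \<noteq> 0 \<longrightarrow> birational3 (\<lambda>x. fst (Rhat a b (x, y))))"
  proof (intro exI conjI allI impI)
    show "nonzero_poly3 (\<lambda>y. dd y (a - b))" by (rule nz_dd)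
    fix y assume "dd y (a - b) \<noteq> 0"
    then show "birational3 (\<lambda>x. fst (Rhat a b (x, y)))"
      by (rule bir) (simp add: R_rot den_dd)
  qed
  show "\<exists>h. nonzero_poly3 h \<and> (\<forall>x. h x \<noteq> 0 \<longrightarrow> birational3 (\<lambda>y. snd (Rhat a b (x, y))))"
  proof (intro exI conjI allI impI)
    show "nonzero_poly3 (\<lambda>x. dd x (a - b))" by (rule nz_dd)
    fix x assume "dd x (a - b) \<noteq> 0"
    then show "birational3 (\<lambda>y. snd (Rhat a b (x, y)))"
      by (rule bir) (simp add: R_rot den_dd add.commute)
  qed
qed

theorem theorem4p1:
  shows "parametric_YB_map Rhat_dom Rhat \<and> quadrirational3 Rhat \<and>
    (\<forall>a b x y u v. Rhat_dom a b (x, y) \<longrightarrow> Rhat a b (x, y) = (u, v) \<longrightarrow>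
       u + v = x + y \<and> mink u u = mink x x \<and> mink v v = mink y y \<and>
       (\<forall>z. Lax u a z ** Lax v b z = Lax y b z ** Lax x a z))"
proof (intro conjI allI impI)
  show "parametric_YB_map Rhat_dom Rhat" by (rule YB)
  show "quadrirational3 Rhat" by (rule QR)
  fix a b x y u v z
  assume d: "Rhat_dom a b (x, y)" and e: "Rhat a b (x, y) = (u, v)"
  show "u + v = x + y" by (rule step(1)[OF d e])
  show "Lax u a z ** Lax v b z = Lax y b z ** Lax x a z" by (rule Lax_eq[OF d e])
  have dn: "den x y (a - b) \<noteq> 0" using d by (simp add: Rhat_dom_def)
  have dd: "dd (x + y) (a - b) \<noteq> 0" using dn by (simp add: den_dd)
  have uv: "u = rot x (x + y) (a - b)" "v = rot y (x + y) (a - b)"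
    using R_rot[OF dn] e by simp_all
  show "mink u u = mink x x" using uv rot_norm[OF dd] by simp
  show "mink v v = mink y y" using uv rot_norm[OF dd] by simp
qed

end
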